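(* Let $M$ be a perfect matching in a graph $G$ and let $A \subseteq V(M)$ be a set containing at most one vertex from each edge of $M$. Suppose that $W$ is a shifted $M$-walk both of whose endpoints lie in $A$. Then $W$ contains a shifted $M$-walk $W'$ such that both endpoints of $W'$ lie in $A$ and no other vertices of $W'$ lie in $A$.
   Context: Given a perfect matching $M$ in a graph $G$, a shifted $M$-walk with endpoints $a = v_1$ and $b = v_{2\ell}$ is a walk $v_1 v_2 \dots v_{2\ell}$ in $G$ such that $v_{2i}v_{2i+1} \in M$ for every $1 \leq i \leq \ell - 1$ and $v_{2i-1}v_{2i} \notin M$ for every $1 \leq i \leq \ell$. *)

theory Defs
  imports Main
begin

definition graph :: "'a set \<Rightarrow> 'a set set \<Rightarrow> bool" where
  "graph V E \<longleftrightarrow> (\<forall>e\<in>E. \<exists>u v. e = {u, v} \<and> u \<noteq> v \<and> u \<in> V \<and> v \<in> V)"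

definition perfect_matching :: "'a set \<Rightarrow> 'a set set \<Rightarrow> 'a set set \<Rightarrow> bool" where
  "perfect_matching V E M \<longleftrightarrow> M \<subseteq> E \<and> (\<forall>v\<in>V. \<exists>!e. e \<in> M \<and> v \<in> e)"

text \<open>A shifted M-walk v_1 ... v_{2l} (l >= 1), as a list (0-indexed). Edge between
  positions k and k+1 (0-indexed) is v_{k+1} v_{k+2}: it lies in M iff k is odd.\<close>
definition shifted_walk :: "'a set \<Rightarrow> 'a set set \<Rightarrow> 'a set set \<Rightarrow> 'a list \<Rightarrow> bool" where
  "shifted_walk V E M W \<longleftrightarrow>
     W \<noteq> [] \<and> even (length W) \<and> set W \<subseteq> V \<and>
     (\<forall>k. Suc k < length W \<longrightarrow> {W ! k, W ! Suc k} \<in> E) \<and>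
     (\<forall>k. Suc k < length W \<longrightarrow> (odd k \<longleftrightarrow> {W ! k, W ! Suc k} \<in> M))"

end

theory Submission
  imports Defs
begin

theorem lemma5p2:
  fixes V :: "'a set" and E M :: "'a set set" and A :: "'a set" and W :: "'a list"
  assumes "graph V E"
    and "perfect_matching V E M"
    and "A \<subseteq> \<Union>M"
    and "\<forall>e\<in>M. card (A \<inter> e) \<le> 1"
    and "shifted_walk V E M W"
    and "hd W \<in> A" and "last W \<in> A"
  shows "\<exists>W' xs ys. W = xs @ W' @ ys \<and> shifted_walk V E M W' \<and>
           hd W' \<in> A \<and> last W' \<in> A \<and>
           (\<forall>k. 0 < k \<and> k < length W' - 1 \<longrightarrow> W' ! k \<notin> A)"
proof -
  define n where "n = length W"
  have sw: "W \<noteq> []" "even n" "set W \<subseteq> V"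
    "\<And>k. Suc k < n \<Longrightarrow> {W ! k, W ! Suc k} \<in> E"
    "\<And>k. Suc k < n \<Longrightarrow> (odd k \<longleftrightarrow> {W ! k, W ! Suc k} \<in> M)"
    using assms(5) unfolding shifted_walk_def n_def by auto
  have n0: "n > 0" using sw(1) n_def by simp
  have w0: "W ! 0 \<in> A" using assms(6) sw(1) by (simp add: hd_conv_nth)
  have wl: "W ! (n - 1) \<in> A" using assms(7) sw(1) n_def by (simp add: last_conv_nth)
  have oddl: "odd (n - 1)" using sw(2) n0 by simp
  define P where "P = (\<lambda>j. odd j \<and> j < n \<and> W ! j \<in> A)"
  define j where "j = (LEAST j. P j)"
  have Pj: "P j" unfolding j_def by (rule LeastI[of P "n - 1"]) (use oddl wl n0 P_def in auto)
  have jmin: "\<And>k. P k \<Longrightarrow> j \<le> k" unfolding j_def by (rule Least_le)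
  have j0: "j > 0" using Pj P_def by (cases j) auto
  define Q where "Q = (\<lambda>i. i < j \<and> W ! i \<in> A)"
  define i where "i = (GREATEST i. Q i)"
  have Qi: "Q i" unfolding i_def by (rule GreatestI_nat[of Q 0 j]) (use w0 j0 Q_def in auto)
  have imax: "\<And>k. Q k \<Longrightarrow> k \<le> i" unfolding i_def by (rule Greatest_le_nat[of Q _ j]) (auto simp: Q_def)
  have ij: "i < j" "W ! i \<in> A" using Qi Q_def by auto
  have jn: "j < n" "odd j" "W ! j \<in> A" using Pj P_def by auto
  have ieven: "even i"
  proof (rule ccontr)
    assume "odd i"
    then have "P i" using ij jn P_def by auto
    then show False using jmin ij by fastforce
  qed
  define W' where "W' = take (j + 1 - i) (drop i W)"
  have lenW': "length W' = j + 1 - i" using jn ij unfolding W'_def n_def by auto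
  have nthW': "\<And>k. k < j + 1 - i \<Longrightarrow> W' ! k = W ! (i + k)"
    unfolding W'_def using jn ij n_def by auto
  have split: "W = take i W @ W' @ drop (j + 1) W"
  proof -
    have "take (j+1) W = take i W @ W'"
      unfolding W'_def using take_add[of i "j + 1 - i" W] ij by simp
    then show ?thesis by (metis append.assoc append_take_drop_id)
  qed
  have "shifted_walk V E M W'"
    unfolding shifted_walk_def
  proof (intro conjI allI impI)
    show "W' \<noteq> []" using lenW' ij by auto
    show "even (length W')" using lenW' ij ieven jn by auto
    show "set W' \<subseteq> V" unfolding W'_def using sw(3) by (meson order_trans set_drop_subset set_take_subset)
  next
    fix k assume k: "Suc k < length W'"
    then show "{W' ! k, W' ! Suc k} \<in> E" using nthW' lenW' sw(4)[of "i+k"] jn by auto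
  next
    fix k assume k: "Suc k < length W'"
    have "odd k \<longleftrightarrow> odd (i + k)" using ieven by simp
    then show "odd k = ({W' ! k, W' ! Suc k} \<in> M)" using k nthW' lenW' sw(5)[of "i+k"] jn by auto
  qed
  moreover have "hd W' \<in> A" using nthW'[of 0] lenW' ij
    by (metis add_0_right hd_conv_nth length_greater_0_conv zero_less_diff less_SucI Suc_eq_plus1)
  moreover have "last W' \<in> A"
  proof -
    have "W' \<noteq> []" using lenW' ij by auto
    then have "last W' = W' ! (j - i)" using lenW' by (simp add: last_conv_nth)
    also have "\<dots> = W ! j" using nthW'[of "j - i"] ij by auto
    finally show ?thesis using jn by simp
  qed
  moreover have "\<forall>k. 0 < k \<and> k < length W' - 1 \<longrightarrow> W' ! k \<notin> A"
  proof (intro allI impI)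
    fix k assume k: "0 < k \<and> k < length W' - 1"
    then have eq: "W' ! k = W ! (i + k)" using nthW' lenW' by auto
    show "W' ! k \<notin> A"
    proof
      assume "W' ! k \<in> A"
      then have "Q (i + k)" using eq k lenW' Q_def by auto
      then show False using imax k by fastforce
    qed
  qed
  ultimately show ?thesis using split by blast
qed

end
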